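(* Let $(w^k)_{k\in\mathcal{K}}$ be a tuple of vectors $w^k\in\mathbb{R}^n$, $w^k\ge0$. Then $g\bigl(\sum_{k\in\mathcal{K}}w^k\bigr)=\sum_{k\in\mathcal{K}}g^k(w^k)$ (i.e. the composition $(w^k)$ is bilevel feasible) if and only if $\mathbf{T}\bigl(\sum_{k\in\mathcal{K}}w^k\bigr)=\bigcap_{k\in\mathcal{K}}\mathbf{T}^k(w^k)$.
   Context: Multi-commodity network pricing setting: $G=(\mathcal{V},\mathcal{A})$ directed graph with arc costs $c\ge0$, nonempty tolled arc set $\mathcal{A}_1\subsetneq\mathcal{A}$, $n=|\mathcal{A}_1|$, $N$ node–arc incidence matrix; finite set $\mathcal{K}$ of commodities, commodity $k$ having origin $o^k$ and destination $d^k$ connected by a path of arcs not in $\mathcal{A}_1$; $b^k_{o^k}=1$, $b^k_{d^k}=-1$, other entries $0$; $\mathcal{X}^k=\{x\in\mathbb{R}^{\mathcal{A}}: Nx=b^k,\ x\ge0\}$; $x_{\mathcal{A}_1}$ is the restriction of $x$ to $\mathcal{A}_1$; $t\in\mathbb{R}^n$ is extended by zeros to $\bar t\in\mathbb{R}^{\mathcal{A}}$. For $t\in\mathbb{R}^n$ let $f^k(t)=\min\{c^\top x+t^\top x_{\mathcal{A}_1}: x\in\mathcal{X}^k\}$ if $t\ge0$, $-\infty$ otherwise; $f=\sum_k f^k$; $g^k(w)=\sup_t\{f^k(t)-t^\top w\}$, $g(w)=\sup_t\{f(t)-t^\top w\}$. For $w\ge0$, $\mathbf{T}(w)$ is the set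 of $t$ that are parts of optimal solutions of $\max_{t,(y^k)}\{\sum_{k\in\mathcal{K}}(b^k)^\top y^k-w^\top t: N^\top y^k-\bar t\le c\ \forall k,\ t\ge0\}$, and $\mathbf{T}^k(w)$ is the set of $t$ that are parts of optimal solutions of $\max_{t,y}\{(b^k)^\top y-w^\top t: N^\top y-\bar t\le c,\ t\ge0\}$. *)

theory Defs
  imports "HOL-Library.Extended_Real"
begin

text \<open>A multi-commodity network pricing instance.
  nodes = V, arcs = A, tolled = A1, src/tgt = tail/head of an arc,
  cost = c, comms = K, orig/dest = o^k, d^k.\<close>
record ('v, 'e, 'k) network =
  nodes  :: "'v set"
  arcs   :: "'e set"
  tolled :: "'e set"
  src    :: "'e \<Rightarrow> 'v"
  tgt    :: "'e \<Rightarrow> 'v"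
  cost   :: "'e \<Rightarrow> real"
  comms  :: "'k set"
  orig   :: "'k \<Rightarrow> 'v"
  dest   :: "'k \<Rightarrow> 'v"

text \<open>Vectors in R^n, n = |A1|, represented as functions vanishing outside A1.\<close>
definition tollvecs :: "'e set \<Rightarrow> ('e \<Rightarrow> real) set" where
  "tollvecs A1 = {t. \<forall>e. e \<notin> A1 \<longrightarrow> t e = 0}"

definition netflow :: "('v,'e,'k,'z) network_scheme \<Rightarrow> ('e \<Rightarrow> real) \<Rightarrow> 'v \<Rightarrow> real" where
  "netflow G x v = (\<Sum>e\<in>arcs G. if src G e = v then x e else 0)
                 - (\<Sum>e\<in>arcs G. if tgt G e = v then x e else 0)"

definition bvec :: "('v,'e,'k,'z) network_scheme \<Rightarrow> 'k \<Rightarrow> 'v \<Rightarrow> real" where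
  "bvec G k v = (if v = orig G k then 1 else 0) - (if v = dest G k then 1 else 0)"

definition Xset :: "('v,'e,'k,'z) network_scheme \<Rightarrow> 'k \<Rightarrow> ('e \<Rightarrow> real) set" where
  "Xset G k = {x. (\<forall>e\<in>arcs G. 0 \<le> x e) \<and> (\<forall>v\<in>nodes G. netflow G x v = bvec G k v)}"

definition text_bar :: "('v,'e,'k,'z) network_scheme \<Rightarrow> ('e \<Rightarrow> real) \<Rightarrow> 'e \<Rightarrow> real" where
  "text_bar G t e = (if e \<in> tolled G then t e else 0)"

definition tdot :: "('v,'e,'k,'z) network_scheme \<Rightarrow> ('e \<Rightarrow> real) \<Rightarrow> ('e \<Rightarrow> real) \<Rightarrow> real" where
  "tdot G t w = (\<Sum>e\<in>tolled G. t e * w e)"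

definition fk :: "('v,'e,'k,'z) network_scheme \<Rightarrow> 'k \<Rightarrow> ('e \<Rightarrow> real) \<Rightarrow> ereal" where
  "fk G k t = (if \<forall>e\<in>tolled G. 0 \<le> t e
      then Inf ((\<lambda>x. ereal ((\<Sum>e\<in>arcs G. cost G e * x e) + (\<Sum>e\<in>tolled G. t e * x e))) ` Xset G k)
      else -\<infinity>)"

definition ftot :: "('v,'e,'k,'z) network_scheme \<Rightarrow> ('e \<Rightarrow> real) \<Rightarrow> ereal" where
  "ftot G t = (\<Sum>k\<in>comms G. fk G k t)"

definition gk :: "('v,'e,'k,'z) network_scheme \<Rightarrow> 'k \<Rightarrow> ('e \<Rightarrow> real) \<Rightarrow> ereal" where
  "gk G k w = (SUP t\<in>tollvecs (tolled G). fk G k t - ereal (tdot G t w))"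

definition gtot :: "('v,'e,'k,'z) network_scheme \<Rightarrow> ('e \<Rightarrow> real) \<Rightarrow> ereal" where
  "gtot G w = (SUP t\<in>tollvecs (tolled G). ftot G t - ereal (tdot G t w))"

definition dual_feas :: "('v,'e,'k,'z) network_scheme \<Rightarrow> ('e \<Rightarrow> real) \<Rightarrow> ('v \<Rightarrow> real) \<Rightarrow> bool" where
  "dual_feas G t y \<longleftrightarrow> (\<forall>e\<in>tolled G. 0 \<le> t e) \<and>
     (\<forall>e\<in>arcs G. y (src G e) - y (tgt G e) - text_bar G t e \<le> cost G e)"

definition bdot :: "('v,'e,'k,'z) network_scheme \<Rightarrow> 'k \<Rightarrow> ('v \<Rightarrow> real) \<Rightarrow> real" where
  "bdot G k y = (\<Sum>v\<in>nodes G. bvec G k v * y v)"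

definition Tk :: "('v,'e,'k,'z) network_scheme \<Rightarrow> 'k \<Rightarrow> ('e \<Rightarrow> real) \<Rightarrow> ('e \<Rightarrow> real) set" where
  "Tk G k w = {t \<in> tollvecs (tolled G). \<exists>y. dual_feas G t y \<and>
      (\<forall>t'\<in>tollvecs (tolled G). \<forall>y'. dual_feas G t' y' \<longrightarrow>
          bdot G k y' - tdot G t' w \<le> bdot G k y - tdot G t w)}"

definition Ttot :: "('v,'e,'k,'z) network_scheme \<Rightarrow> ('e \<Rightarrow> real) \<Rightarrow> ('e \<Rightarrow> real) set" where
  "Ttot G w = {t \<in> tollvecs (tolled G). \<exists>Y. (\<forall>k\<in>comms G. dual_feas G t (Y k)) \<and>
      (\<forall>t'\<in>tollvecs (tolled G). \<forall>Y'. (\<forall>k\<in>comms G. dual_feas G t' (Y' k)) \<longrightarrow>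
          (\<Sum>k\<in>comms G. bdot G k (Y' k)) - tdot G t' w \<le> (\<Sum>k\<in>comms G. bdot G k (Y k)) - tdot G t w)}"

definition valid_network :: "('v,'e,'k,'z) network_scheme \<Rightarrow> bool" where
  "valid_network G \<longleftrightarrow>
     finite (nodes G) \<and> finite (arcs G) \<and>
     (\<forall>e\<in>arcs G. src G e \<in> nodes G \<and> tgt G e \<in> nodes G) \<and>
     (\<forall>e\<in>arcs G. 0 \<le> cost G e) \<and>
     tolled G \<noteq> {} \<and> tolled G \<subset> arcs G \<and>
     finite (comms G) \<and> comms G \<noteq> {} \<and>
     (\<forall>k\<in>comms G. orig G k \<in> nodes G \<and> dest G k \<in> nodes G \<and> orig G k \<noteq> dest G k \<and>
        (orig G k, dest G k) \<in> {(src G e, tgt G e) | e. e \<in> arcs G - tolled G}\<^sup>*)"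

end

theory Submission
  imports Defs "HOL-Analysis.Analysis"
begin


definition wt :: "('v,'e,'k,'z) network_scheme \<Rightarrow> ('e \<Rightarrow> real) \<Rightarrow> 'e \<Rightarrow> real" where
  "wt G t e = cost G e + text_bar G t e"

definition wlen :: "('v,'e,'k,'z) network_scheme \<Rightarrow> ('e \<Rightarrow> real) \<Rightarrow> 'e list \<Rightarrow> real" where
  "wlen G t es = sum_list (map (wt G t) es)"

inductive walk :: "('v,'e,'k,'z) network_scheme \<Rightarrow> 'v \<Rightarrow> 'e list \<Rightarrow> 'v \<Rightarrow> bool" for G where
  wnil: "walk G u [] u"
| wcons: "e \<in> arcs G \<Longrightarrow> walk G (tgt G e) es v \<Longrightarrow> walk G (src G e) (e # es) v"

definition cnt :: "'e list \<Rightarrow> 'e \<Rightarrow> real" where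
  "cnt es e = real (count_list es e)"

definition distw :: "('v,'e,'k,'z) network_scheme \<Rightarrow> ('e \<Rightarrow> real) \<Rightarrow> 'v \<Rightarrow> 'v \<Rightarrow> real" where
  "distw G t u v = Inf (wlen G t ` {es. walk G u es v})"

lemma cnt_Nil[simp]: "cnt [] = (\<lambda>e. 0)" by (auto simp: cnt_def)
lemma cnt_Cons: "cnt (a # es) e' = cnt es e' + (if e' = a then 1 else 0)"
  by (auto simp: cnt_def)

lemma sum_if_add_delta:
  assumes "finite A" "e \<in> A"
  shows "(\<Sum>e'\<in>A. if P e' then x e' + (if e' = e then 1 else 0) else 0)
       = (\<Sum>e'\<in>A. if P e' then x e' else 0) + (if P e then (1::real) else 0)"
proof -
  have "(\<Sum>e'\<in>A. if P e' then x e' + (if e' = e then 1 else 0) else 0)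
      = (\<Sum>e'\<in>A. (if P e' then x e' else 0) + (if e' = e then (if P e then 1 else 0) else (0::real)))"
    by (rule sum.cong) auto
  also have "\<dots> = (\<Sum>e'\<in>A. if P e' then x e' else 0) + (if P e then (1::real) else 0)"
    unfolding sum.distrib using assms by simp
  finally show ?thesis .
qed

lemma walk_arcs: "walk G u es v \<Longrightarrow> set es \<subseteq> arcs G"
  by (induction rule: walk.induct) auto

lemma netflow_cnt:
  assumes "finite (arcs G)" "walk G u es v"
  shows "netflow G (cnt es) n = (if n = u then 1 else 0) - (if n = v then 1 else 0)"
  using assms(2)
proof (induction rule: walk.induct)
  case (wnil u)
  then show ?case by (simp add: netflow_def)
next
  case (wcons e es v)
  have "netflow G (cnt (e # es)) n = netflow G (cnt es) n
        + (if src G e = n then 1 else 0) - (if tgt G e = n then 1 else 0)"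
    unfolding netflow_def cnt_Cons
    using sum_if_add_delta[OF assms(1) wcons(1), of "\<lambda>e'. src G e' = n" "cnt es"]
          sum_if_add_delta[OF assms(1) wcons(1), of "\<lambda>e'. tgt G e' = n" "cnt es"]
    by simp
  then show ?case using wcons by auto
qed

lemma cost_cnt:
  assumes "finite (arcs G)" "finite (tolled G)" "walk G u es v"
  shows "(\<Sum>e\<in>arcs G. cost G e * cnt es e) + (\<Sum>e\<in>tolled G. t e * cnt es e) = wlen G t es"
  using assms(3)
proof (induction rule: walk.induct)
  case (wnil u)
  then show ?case by (simp add: wlen_def)
next
  case (wcons e es v)
  have h: "(\<Sum>e'\<in>A. f e' * cnt (e # es) e') = (\<Sum>e'\<in>A. f e' * cnt es e') + (if e \<in> A then f e else (0::real))"
    if "finite A" for A f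
  proof -
    have "(\<Sum>e'\<in>A. f e' * cnt (e # es) e') = (\<Sum>e'\<in>A. f e' * cnt es e' + (if e' = e then f e else 0))"
      by (rule sum.cong) (auto simp: cnt_Cons algebra_simps)
    then show ?thesis using that by (simp add: sum.distrib)
  qed
  show ?case using wcons h[OF assms(1), of "cost G"] h[OF assms(2), of t]
    by (simp add: wlen_def wt_def text_bar_def)
qed

lemma netflow_dot:
  assumes "finite (nodes G)" "finite (arcs G)" "\<forall>e\<in>arcs G. src G e \<in> nodes G \<and> tgt G e \<in> nodes G"
  shows "(\<Sum>v\<in>nodes G. netflow G x v * y v) = (\<Sum>e\<in>arcs G. x e * (y (src G e) - y (tgt G e)))"
proof -
  have "(\<Sum>v\<in>nodes G. netflow G x v * y v)
     = (\<Sum>v\<in>nodes G. \<Sum>e\<in>arcs G. (if src G e = v then x e * y v else 0))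
     - (\<Sum>v\<in>nodes G. \<Sum>e\<in>arcs G. (if tgt G e = v then x e * y v else 0))"
    proof -
    have m: "\<And>P a b. (if P then a else 0) * b = (if P then a * b else (0::real))" by simp
    show ?thesis unfolding netflow_def by (simp add: left_diff_distrib sum_subtractf sum_distrib_right m)
  qed
  also have "\<dots> = (\<Sum>e\<in>arcs G. \<Sum>v\<in>nodes G. (if src G e = v then x e * y v else 0))
     - (\<Sum>e\<in>arcs G. \<Sum>v\<in>nodes G. (if tgt G e = v then x e * y v else 0))"
    by (simp only: sum.swap[of _ "nodes G"])
  also have "\<dots> = (\<Sum>e\<in>arcs G. x e * y (src G e)) - (\<Sum>e\<in>arcs G. x e * y (tgt G e))"
    using assms by (simp add: sum.delta)
  also have "\<dots> = (\<Sum>e\<in>arcs G. x e * (y (src G e) - y (tgt G e)))"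
    by (simp add: right_diff_distrib sum_subtractf)
  finally show ?thesis .
qed


abbreviation nonneg :: "('v,'e,'k,'z) network_scheme \<Rightarrow> ('e \<Rightarrow> real) \<Rightarrow> bool" where
  "nonneg G t \<equiv> (\<forall>e\<in>tolled G. 0 \<le> t e)"

lemma wlen_Nil[simp]: "wlen G t [] = 0" by (simp add: wlen_def)
lemma wlen_Cons[simp]: "wlen G t (e # es) = wt G t e + wlen G t es" by (simp add: wlen_def)

lemma wt_nonneg: "valid_network G \<Longrightarrow> nonneg G t \<Longrightarrow> e \<in> arcs G \<Longrightarrow> 0 \<le> wt G t e"
  by (auto simp: valid_network_def wt_def text_bar_def)

lemma wlen_nonneg: "walk G u es v \<Longrightarrow> valid_network G \<Longrightarrow> nonneg G t \<Longrightarrow> 0 \<le> wlen G t es"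
proof (induction rule: walk.induct)
  case (wcons e es v)
  then show ?case using wt_nonneg[of G t e] by simp
qed simp

lemma wlen_ge_elem: "walk G u es v \<Longrightarrow> valid_network G \<Longrightarrow> nonneg G t \<Longrightarrow> e \<in> set es \<Longrightarrow> wt G t e \<le> wlen G t es"
proof (induction rule: walk.induct)
  case (wnil u) then show ?case by simp
next
  case (wcons e' es v)
  show ?case
  proof (cases "e = e'")
    case True
    then show ?thesis using wlen_nonneg[of G "tgt G e'" es v t] wcons.prems wcons.hyps by simp
  next
    case False
    then have "e \<in> set es" using wcons.prems by simp
    then have "wt G t e \<le> wlen G t es" using wcons.IH wcons.prems by blast
    then show ?thesis using wt_nonneg[of G t e'] wcons.prems wcons.hyps by simp
  qed
qed

lemma bdd_walks: "valid_network G \<Longrightarrow> nonneg G t \<Longrightarrow> bdd_below (wlen G t ` {es. walk G u es v})"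
proof (rule bdd_belowI[of _ 0])
  fix x assume v: "valid_network G" "nonneg G t" and "x \<in> wlen G t ` {es. walk G u es v}"
  then obtain es where "walk G u es v" "x = wlen G t es" by blast
  then show "0 \<le> x" using wlen_nonneg[of G u es v t] v by simp
qed

lemma dist_le: "valid_network G \<Longrightarrow> nonneg G t \<Longrightarrow> walk G u es v \<Longrightarrow> distw G t u v \<le> wlen G t es"
  unfolding distw_def
proof (rule cInf_lower)
  assume "valid_network G" "nonneg G t" "walk G u es v"
  then show "wlen G t es \<in> wlen G t ` {es. walk G u es v}" by blast
  show "bdd_below (wlen G t ` {es. walk G u es v})" by (rule bdd_walks) fact+
qed

lemma dist_ge: "valid_network G \<Longrightarrow> nonneg G t \<Longrightarrow> walk G u es v \<Longrightarrow> 0 \<le> distw G t u v"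
  unfolding distw_def
proof (rule cInf_greatest)
  assume v: "valid_network G" "nonneg G t" and w: "walk G u es v"
  then show "wlen G t ` {es. walk G u es v} \<noteq> {}" by blast
  fix x assume "x \<in> wlen G t ` {es. walk G u es v}"
  then obtain es where "walk G u es v" "x = wlen G t es" by blast
  then show "0 \<le> x" using wlen_nonneg[of G u es v t] v by simp
qed

lemma dist_self: "valid_network G \<Longrightarrow> nonneg G t \<Longrightarrow> distw G t v v = 0"
proof -
  assume v: "valid_network G" and t: "nonneg G t"
  have w: "walk G v [] v" by (rule walk.wnil)
  show ?thesis using dist_le[OF v t w] dist_ge[OF v t w] by simp
qed

lemma dist_approx: "valid_network G \<Longrightarrow> walk G u es v \<Longrightarrow> 0 < \<epsilon> \<Longrightarrow>
    \<exists>es'. walk G u es' v \<and> wlen G t es' < distw G t u v + \<epsilon>"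
proof -
  assume "walk G u es v" "0 < \<epsilon>"
  then have "wlen G t ` {es. walk G u es v} \<noteq> {}" "Inf (wlen G t ` {es. walk G u es v}) < distw G t u v + \<epsilon>"
    by (auto simp: distw_def)
  from cInf_lessD[OF this] show ?thesis by blast
qed

lemma dist_step:
  assumes "valid_network G" "nonneg G t" "e \<in> arcs G" "walk G (tgt G e) es v"
  shows "distw G t (src G e) v \<le> wt G t e + distw G t (tgt G e) v"
proof -
  have "distw G t (src G e) v - wt G t e \<le> distw G t (tgt G e) v"
    unfolding distw_def[of G t "tgt G e"]
  proof (rule cInf_greatest)
    show "wlen G t ` {es. walk G (tgt G e) es v} \<noteq> {}" using assms(4) by blast
    fix x assume "x \<in> wlen G t ` {es. walk G (tgt G e) es v}"
    then obtain es' where "walk G (tgt G e) es' v" "x = wlen G t es'" by auto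
    then have "walk G (src G e) (e # es') v" using walk.wcons[OF assms(3)] by blast
    from dist_le[OF assms(1,2) this] \<open>x = _\<close> show "distw G t (src G e) v - wt G t e \<le> x" by simp
  qed
  then show ?thesis by simp
qed

lemma rtrancl_walk:
  assumes "(a, b) \<in> {(src G e, tgt G e) | e. e \<in> arcs G - tolled G}\<^sup>*"
  shows "\<exists>P. walk G a P b \<and> set P \<inter> tolled G = {}"
  using assms
proof (induction rule: converse_rtrancl_induct)
  case base
  show ?case using walk.wnil[of G b] by (intro exI[of _ "[]"]) simp
next
  case (step y z)
  then obtain e where e: "e \<in> arcs G" "e \<notin> tolled G" "y = src G e" "z = tgt G e" by auto
  from step obtain P where P: "walk G z P b" "set P \<inter> tolled G = {}" by auto
  have "walk G (src G e) (e # P) b" using walk.wcons[OF e(1)] P(1) e(4) by simp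
  then have "walk G y (e # P) b" using e(3) by simp
  moreover have "set (e # P) \<inter> tolled G = {}" using P(2) e(2) by simp
  ultimately show ?case by blast
qed

lemma walk_free: "valid_network G \<Longrightarrow> k \<in> comms G \<Longrightarrow> \<exists>P. walk G (orig G k) P (dest G k) \<and> set P \<inter> tolled G = {}"
proof -
  assume "valid_network G" "k \<in> comms G"
  then have "(orig G k, dest G k) \<in> {(src G e, tgt G e) | e. e \<in> arcs G - tolled G}\<^sup>*"
    unfolding valid_network_def by blast
  then show ?thesis by (rule rtrancl_walk)
qed

lemma wlen_free: "set P \<inter> tolled G = {} \<Longrightarrow> wlen G t P = wlen G t' P"
  unfolding wlen_def by (rule arg_cong[where f=sum_list], rule map_cong) (auto simp: wt_def text_bar_def)


lemma bdot_eq: "valid_network G \<Longrightarrow> k \<in> comms G \<Longrightarrow> bdot G k y = y (orig G k) - y (dest G k)"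
proof -
  assume v: "valid_network G" and k: "k \<in> comms G"
  have "bdot G k y = (\<Sum>v\<in>nodes G. (if v = orig G k then y v else 0) - (if v = dest G k then y v else 0))"
    unfolding bdot_def bvec_def by (rule sum.cong) auto
  also have "\<dots> = y (orig G k) - y (dest G k)"
    using v k unfolding valid_network_def by (simp add: sum_subtractf)
  finally show ?thesis .
qed

lemma weak_duality:
  assumes v: "valid_network G" and x: "x \<in> Xset G k" and d: "dual_feas G t y"
  shows "bdot G k y \<le> (\<Sum>e\<in>arcs G. cost G e * x e) + (\<Sum>e\<in>tolled G. t e * x e)"
proof -
  have fin: "finite (nodes G)" "finite (arcs G)" "\<forall>e\<in>arcs G. src G e \<in> nodes G \<and> tgt G e \<in> nodes G"
    "tolled G \<subseteq> arcs G"
    using v by (auto simp: valid_network_def)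
  have "bdot G k y = (\<Sum>v\<in>nodes G. netflow G x v * y v)"
    unfolding bdot_def using x by (intro sum.cong) (auto simp: Xset_def)
  also have "\<dots> = (\<Sum>e\<in>arcs G. x e * (y (src G e) - y (tgt G e)))"
    using netflow_dot[OF fin(1-3)] .
  also have "\<dots> \<le> (\<Sum>e\<in>arcs G. x e * (cost G e + text_bar G t e))"
    using x d by (intro sum_mono mult_left_mono) (auto simp: Xset_def dual_feas_def)
  also have "\<dots> = (\<Sum>e\<in>arcs G. cost G e * x e) + (\<Sum>e\<in>arcs G. text_bar G t e * x e)"
    by (simp add: algebra_simps sum.distrib)
  also have "(\<Sum>e\<in>arcs G. text_bar G t e * x e) = (\<Sum>e\<in>arcs G. if e \<in> tolled G then t e * x e else 0)"
    by (rule sum.cong) (auto simp: text_bar_def)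
  also have "\<dots> = (\<Sum>e\<in>tolled G. t e * x e)"
    using fin by (simp add: sum.inter_restrict[symmetric] Int_absorb1 Int_commute)
  finally show ?thesis .
qed

lemma walk_Xset:
  assumes v: "valid_network G" and k: "k \<in> comms G" and P: "walk G (orig G k) P (dest G k)"
  shows "cnt P \<in> Xset G k"
  using netflow_cnt[OF _ P] v unfolding Xset_def bvec_def valid_network_def by (auto simp: cnt_def)

lemma fk_le_walk:
  assumes v: "valid_network G" and k: "k \<in> comms G" and t: "nonneg G t" and P: "walk G (orig G k) P (dest G k)"
  shows "fk G k t \<le> ereal (wlen G t P)"
proof -
  have fin: "finite (arcs G)" "finite (tolled G)" using v by (auto simp: valid_network_def intro: finite_subset)
  have "fk G k t \<le> ereal ((\<Sum>e\<in>arcs G. cost G e * cnt P e) + (\<Sum>e\<in>tolled G. t e * cnt P e))"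
    unfolding fk_def using t walk_Xset[OF v k P] by (auto intro: Inf_lower)
  then show ?thesis using cost_cnt[OF fin P] by simp
qed

lemma fk_weak:
  assumes v: "valid_network G" and d: "dual_feas G t y"
  shows "ereal (bdot G k y) \<le> fk G k t"
proof -
  have t: "nonneg G t" using d by (simp add: dual_feas_def)
  have "ereal (bdot G k y) \<le> Inf ((\<lambda>x. ereal ((\<Sum>e\<in>arcs G. cost G e * x e) + (\<Sum>e\<in>tolled G. t e * x e))) ` Xset G k)"
  proof (rule Inf_greatest)
    fix z assume "z \<in> (\<lambda>x. ereal ((\<Sum>e\<in>arcs G. cost G e * x e) + (\<Sum>e\<in>tolled G. t e * x e))) ` Xset G k"
    then obtain x where x: "x \<in> Xset G k" and z: "z = ereal ((\<Sum>e\<in>arcs G. cost G e * x e) + (\<Sum>e\<in>tolled G. t e * x e))"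
      by blast
    show "ereal (bdot G k y) \<le> z" using weak_duality[OF v x d] z by simp
  qed
  then show ?thesis unfolding fk_def using t by simp
qed

lemma min_aux: "a \<le> c + b \<Longrightarrow> 0 \<le> c \<Longrightarrow> min M a \<le> c + min M (b::real)"
  by (auto simp: min_def)

lemma strong_duality:
  assumes v: "valid_network G" and k: "k \<in> comms G" and t: "nonneg G t"
  shows "\<exists>y. dual_feas G t y \<and> bdot G k y = distw G t (orig G k) (dest G k)"
proof -
  let ?o = "orig G k" and ?d = "dest G k"
  define M where "M = distw G t ?o ?d"
  define y where "y v = (if \<exists>P. walk G v P ?d then min M (distw G t v ?d) else M)" for v
  obtain P0 where P0: "walk G ?o P0 ?d" using walk_free[OF v k] by auto
  have M0: "0 \<le> M" unfolding M_def using dist_ge[OF v t P0] .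
  have feas: "dual_feas G t y"
    unfolding dual_feas_def
  proof (intro conjI ballI)
    fix e assume e: "e \<in> arcs G"
    have w0: "0 \<le> wt G t e" using wt_nonneg[OF v t e] .
    show "y (src G e) - y (tgt G e) - text_bar G t e \<le> cost G e"
    proof (cases "\<exists>P. walk G (tgt G e) P ?d")
      case True
      then obtain P where P: "walk G (tgt G e) P ?d" by auto
      then have "walk G (src G e) (e # P) ?d" using walk.wcons[OF e P] by blast
      then have ys: "y (src G e) = min M (distw G t (src G e) ?d)" unfolding y_def by auto
      have yt: "y (tgt G e) = min M (distw G t (tgt G e) ?d)" unfolding y_def using True by auto
      have "distw G t (src G e) ?d \<le> wt G t e + distw G t (tgt G e) ?d" using dist_step[OF v t e P] .
      then have "min M (distw G t (src G e) ?d) \<le> wt G t e + min M (distw G t (tgt G e) ?d)"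
        using min_aux w0 by blast
      then show ?thesis using ys yt unfolding wt_def by linarith
    next
      case False
      then have "y (tgt G e) = M" unfolding y_def by auto
      moreover have "y (src G e) \<le> M" unfolding y_def by auto
      ultimately show ?thesis using w0 unfolding wt_def by linarith
    qed
  qed (use t in auto)
  have ex1: "\<exists>P. walk G ?o P ?d" using P0 by blast
  have yo: "y ?o = M" using ex1 by (simp add: y_def M_def)
  have ex2: "\<exists>P. walk G ?d P ?d" using walk.wnil[of G ?d] by blast
  have yd: "y ?d = 0" using ex2 M0 dist_self[OF v t, of ?d] by (simp add: y_def)
  have "bdot G k y = M" using bdot_eq[OF v k, of y] yo yd by simp
  then show ?thesis using feas M_def by auto
qed

lemma fk_eq:
  assumes v: "valid_network G" and k: "k \<in> comms G" and t: "nonneg G t"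
  shows "fk G k t = ereal (distw G t (orig G k) (dest G k))"
proof (rule antisym)
  obtain y where y: "dual_feas G t y" "bdot G k y = distw G t (orig G k) (dest G k)"
    using strong_duality[OF assms] by auto
  show "ereal (distw G t (orig G k) (dest G k)) \<le> fk G k t"
    using fk_weak[OF v y(1), of k] y(2) by simp
  obtain P0 where P0: "walk G (orig G k) P0 (dest G k)" using walk_free[OF v k] by auto
  show "fk G k t \<le> ereal (distw G t (orig G k) (dest G k))"
  proof (rule ereal_le_epsilon2)
    fix \<epsilon> :: real assume "0 < \<epsilon>"
    then obtain P where P: "walk G (orig G k) P (dest G k)" "wlen G t P < distw G t (orig G k) (dest G k) + \<epsilon>"
      using dist_approx[OF v P0, of \<epsilon> t] by blast
    have "fk G k t \<le> ereal (wlen G t P)" using fk_le_walk[OF v k t P(1)] .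
    also have "\<dots> \<le> ereal (distw G t (orig G k) (dest G k)) + ereal \<epsilon>" using P(2) by simp
    finally show "fk G k t \<le> ereal (distw G t (orig G k) (dest G k)) + ereal \<epsilon>" .
  qed
qed

lemma dist_weak:
  assumes v: "valid_network G" and k: "k \<in> comms G" and d: "dual_feas G t y"
  shows "bdot G k y \<le> distw G t (orig G k) (dest G k)"
proof -
  have "nonneg G t" using d by (simp add: dual_feas_def)
  then show ?thesis using fk_weak[OF v d, of k] fk_eq[OF v k] by simp
qed



lemma argmax_char:
  fixes r d :: "'a \<Rightarrow> real" and obj :: "'b \<Rightarrow> real"
  assumes FP: "\<And>t y. F t y \<Longrightarrow> P t"
    and ex: "\<And>t. t \<in> S \<Longrightarrow> P t \<Longrightarrow> \<exists>y. F t y \<and> obj y = r t"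
    and le: "\<And>t y. t \<in> S \<Longrightarrow> F t y \<Longrightarrow> obj y \<le> r t"
  shows "{t\<in>S. \<exists>y. F t y \<and> (\<forall>t'\<in>S. \<forall>y'. F t' y' \<longrightarrow> obj y' - d t' \<le> obj y - d t)}
       = {t\<in>S. P t \<and> (\<forall>t'\<in>S. P t' \<longrightarrow> r t' - d t' \<le> r t - d t)}"
proof (intro set_eqI iffI)
  fix t assume "t \<in> {t\<in>S. \<exists>y. F t y \<and> (\<forall>t'\<in>S. \<forall>y'. F t' y' \<longrightarrow> obj y' - d t' \<le> obj y - d t)}"
  then obtain y where t: "t \<in> S" and y: "F t y" and opt: "\<forall>t'\<in>S. \<forall>y'. F t' y' \<longrightarrow> obj y' - d t' \<le> obj y - d t"
    by blast
  have Pt: "P t" using FP y .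
  have ry: "obj y \<le> r t" using le t y .
  have "\<forall>t'\<in>S. P t' \<longrightarrow> r t' - d t' \<le> r t - d t"
  proof (intro ballI impI)
    fix t' assume t': "t' \<in> S" "P t'"
    then obtain y' where y': "F t' y'" "obj y' = r t'" using ex by blast
    then have "obj y' - d t' \<le> obj y - d t" using opt t' by blast
    then show "r t' - d t' \<le> r t - d t" using y' ry by linarith
  qed
  then show "t \<in> {t\<in>S. P t \<and> (\<forall>t'\<in>S. P t' \<longrightarrow> r t' - d t' \<le> r t - d t)}" using t Pt by blast
next
  fix t assume "t \<in> {t\<in>S. P t \<and> (\<forall>t'\<in>S. P t' \<longrightarrow> r t' - d t' \<le> r t - d t)}"
  then have t: "t \<in> S" "P t" and opt: "\<forall>t'\<in>S. P t' \<longrightarrow> r t' - d t' \<le> r t - d t" by blast+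
  obtain y where y: "F t y" "obj y = r t" using ex t by blast
  have "\<forall>t'\<in>S. \<forall>y'. F t' y' \<longrightarrow> obj y' - d t' \<le> obj y - d t"
  proof (intro ballI allI impI)
    fix t' y' assume t': "t' \<in> S" "F t' y'"
    then have a: "obj y' \<le> r t'" and b: "P t'" using le FP by blast+
    have "r t' - d t' \<le> r t - d t" using opt t'(1) b by blast
    then show "obj y' - d t' \<le> obj y - d t" using a y(2) by linarith
  qed
  then show "t \<in> {t\<in>S. \<exists>y. F t y \<and> (\<forall>t'\<in>S. \<forall>y'. F t' y' \<longrightarrow> obj y' - d t' \<le> obj y - d t)}"
    using t y by blast
qed



lemma sup_conv:
  fixes h :: "'a \<Rightarrow> ereal" and \<phi> :: "'a \<Rightarrow> real"
  assumes hm: "\<And>t. t \<in> S \<Longrightarrow> \<not> P t \<Longrightarrow> h t = -\<infinity>"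
    and hr: "\<And>t. t \<in> S \<Longrightarrow> P t \<Longrightarrow> h t = ereal (\<phi> t)"
    and ne: "{t\<in>S. P t} \<noteq> {}" and bdd: "bdd_above (\<phi> ` {t\<in>S. P t})"
  shows "(SUP t\<in>S. h t) = ereal (SUP t\<in>{t\<in>S. P t}. \<phi> t)"
proof (rule antisym)
  show "(SUP t\<in>S. h t) \<le> ereal (SUP t\<in>{t\<in>S. P t}. \<phi> t)"
  proof (rule SUP_least)
    fix t assume t: "t \<in> S"
    show "h t \<le> ereal (SUP t\<in>{t\<in>S. P t}. \<phi> t)"
    proof (cases "P t")
      case True
      then have "\<phi> t \<le> (SUP t\<in>{t\<in>S. P t}. \<phi> t)" using t bdd by (intro cSUP_upper) auto
      then show ?thesis using hr[OF t True] by simp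
    next
      case False
      then show ?thesis using hm[OF t False] by simp
    qed
  qed
  show "ereal (SUP t\<in>{t\<in>S. P t}. \<phi> t) \<le> (SUP t\<in>S. h t)"
  proof (rule ereal_le_epsilon2)
    fix \<epsilon> :: real assume e: "0 < \<epsilon>"
    have "(SUP t\<in>{t\<in>S. P t}. \<phi> t) - \<epsilon> < (SUP t\<in>{t\<in>S. P t}. \<phi> t)" using e by simp
    then obtain t where t: "t \<in> {t\<in>S. P t}" and lt: "(SUP t\<in>{t\<in>S. P t}. \<phi> t) - \<epsilon> < \<phi> t"
      using less_cSUP_iff[OF ne bdd] by blast
    have "h t \<le> (SUP t\<in>S. h t)" using t by (intro SUP_upper) auto
    then have "ereal (\<phi> t) \<le> (SUP t\<in>S. h t)" using hr t by auto
    then have "ereal (\<phi> t) + ereal \<epsilon> \<le> (SUP t\<in>S. h t) + ereal \<epsilon>" by (rule add_right_mono)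
    moreover have "ereal (SUP t\<in>{t\<in>S. P t}. \<phi> t) \<le> ereal (\<phi> t) + ereal \<epsilon>" using lt by simp
    ultimately show "ereal (SUP t\<in>{t\<in>S. P t}. \<phi> t) \<le> (SUP t\<in>S. h t) + ereal \<epsilon>" by (rule order_trans[rotated])
  qed
qed



lemma main_abstract:
  fixes \<phi> :: "'k \<Rightarrow> 'a \<Rightarrow> real"
  assumes K: "finite K" "K \<noteq> {}" and bdd: "\<And>k. k \<in> K \<Longrightarrow> bdd_above (\<phi> k ` A)"
    and t0: "t0 \<in> A" and att: "\<And>t. t \<in> A \<Longrightarrow> (\<Sum>k\<in>K. \<phi> k t) \<le> (\<Sum>k\<in>K. \<phi> k t0)"
  shows "(SUP t\<in>A. \<Sum>k\<in>K. \<phi> k t) = (\<Sum>k\<in>K. SUP t\<in>A. \<phi> k t) \<longleftrightarrow>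
         {t\<in>A. \<forall>t'\<in>A. (\<Sum>k\<in>K. \<phi> k t') \<le> (\<Sum>k\<in>K. \<phi> k t)} = (\<Inter>k\<in>K. {t\<in>A. \<forall>t'\<in>A. \<phi> k t' \<le> \<phi> k t})"
proof -
  define \<gamma> where "\<gamma> k = (SUP t\<in>A. \<phi> k t)" for k
  have up: "\<phi> k t \<le> \<gamma> k" if "k \<in> K" "t \<in> A" for k t
    unfolding \<gamma>_def using bdd that by (intro cSUP_upper) auto
  have Gam: "(SUP t\<in>A. \<Sum>k\<in>K. \<phi> k t) = (\<Sum>k\<in>K. \<phi> k t0)"
    by (rule cSup_eq_maximum) (use t0 att in auto)
  have gmax: "\<gamma> k = \<phi> k t" if "t \<in> A" "\<forall>t'\<in>A. \<phi> k t' \<le> \<phi> k t" for k t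
    unfolding \<gamma>_def by (rule cSup_eq_maximum) (use that in auto)
  have sumle: "(\<Sum>k\<in>K. \<phi> k t) \<le> (\<Sum>k\<in>K. \<gamma> k)" if "t \<in> A" for t
    using up that by (intro sum_mono) auto
  have eqsum: "\<forall>k\<in>K. \<phi> k t = \<gamma> k" if t: "t \<in> A" and eq: "(\<Sum>k\<in>K. \<phi> k t) = (\<Sum>k\<in>K. \<gamma> k)" for t
  proof -
    have s0: "(\<Sum>k\<in>K. \<gamma> k - \<phi> k t) = 0" using eq by (simp add: sum_subtractf)
    have nn: "\<And>k. k \<in> K \<Longrightarrow> 0 \<le> \<gamma> k - \<phi> k t" using up t by auto
    have "\<forall>k\<in>K. \<gamma> k - \<phi> k t = 0" using sum_nonneg_eq_0_iff[OF K(1) nn] s0 by simp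
    then show ?thesis by auto
  qed
  have iff: "(SUP t\<in>A. \<Sum>k\<in>K. \<phi> k t) = (\<Sum>k\<in>K. \<gamma> k) \<longleftrightarrow>
         {t\<in>A. \<forall>t'\<in>A. (\<Sum>k\<in>K. \<phi> k t') \<le> (\<Sum>k\<in>K. \<phi> k t)} = (\<Inter>k\<in>K. {t\<in>A. \<forall>t'\<in>A. \<phi> k t' \<le> \<phi> k t})"
  proof
    assume H: "(SUP t\<in>A. \<Sum>k\<in>K. \<phi> k t) = (\<Sum>k\<in>K. \<gamma> k)"
    show "{t\<in>A. \<forall>t'\<in>A. (\<Sum>k\<in>K. \<phi> k t') \<le> (\<Sum>k\<in>K. \<phi> k t)} = (\<Inter>k\<in>K. {t\<in>A. \<forall>t'\<in>A. \<phi> k t' \<le> \<phi> k t})"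
    proof (intro set_eqI iffI)
      fix t assume "t \<in> {t\<in>A. \<forall>t'\<in>A. (\<Sum>k\<in>K. \<phi> k t') \<le> (\<Sum>k\<in>K. \<phi> k t)}"
      then have t: "t \<in> A" and opt: "\<forall>t'\<in>A. (\<Sum>k\<in>K. \<phi> k t') \<le> (\<Sum>k\<in>K. \<phi> k t)" by blast+
      have "(\<Sum>k\<in>K. \<phi> k t0) \<le> (\<Sum>k\<in>K. \<phi> k t)" using opt t0 by blast
      then have "(\<Sum>k\<in>K. \<gamma> k) \<le> (\<Sum>k\<in>K. \<phi> k t)" using H Gam by simp
      then have "(\<Sum>k\<in>K. \<phi> k t) = (\<Sum>k\<in>K. \<gamma> k)" using sumle[OF t] by linarith
      then have eqk: "\<forall>k\<in>K. \<phi> k t = \<gamma> k" using eqsum t by blast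
      show "t \<in> (\<Inter>k\<in>K. {t\<in>A. \<forall>t'\<in>A. \<phi> k t' \<le> \<phi> k t})"
        using eqk up t by auto
    next
      fix t assume H2: "t \<in> (\<Inter>k\<in>K. {t\<in>A. \<forall>t'\<in>A. \<phi> k t' \<le> \<phi> k t})"
      obtain k0 where "k0 \<in> K" using K(2) by blast
      then have t: "t \<in> A" using H2 by blast
      have "\<forall>k\<in>K. \<gamma> k = \<phi> k t" using H2 gmax by blast
      then have "(\<Sum>k\<in>K. \<phi> k t) = (\<Sum>k\<in>K. \<gamma> k)" by simp
      then have "(\<Sum>k\<in>K. \<phi> k t) = (\<Sum>k\<in>K. \<phi> k t0)" using H Gam by simp
      then show "t \<in> {t\<in>A. \<forall>t'\<in>A. (\<Sum>k\<in>K. \<phi> k t') \<le> (\<Sum>k\<in>K. \<phi> k t)}" using t att by auto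
    qed
  next
    assume H: "{t\<in>A. \<forall>t'\<in>A. (\<Sum>k\<in>K. \<phi> k t') \<le> (\<Sum>k\<in>K. \<phi> k t)} = (\<Inter>k\<in>K. {t\<in>A. \<forall>t'\<in>A. \<phi> k t' \<le> \<phi> k t})"
    have "t0 \<in> {t\<in>A. \<forall>t'\<in>A. (\<Sum>k\<in>K. \<phi> k t') \<le> (\<Sum>k\<in>K. \<phi> k t)}" using t0 att by blast
    then have "t0 \<in> (\<Inter>k\<in>K. {t\<in>A. \<forall>t'\<in>A. \<phi> k t' \<le> \<phi> k t})" using H by simp
    then have "\<forall>k\<in>K. \<gamma> k = \<phi> k t0" using gmax t0 by blast
    then show "(SUP t\<in>A. \<Sum>k\<in>K. \<phi> k t) = (\<Sum>k\<in>K. \<gamma> k)" using Gam by simp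
  qed
  then show ?thesis unfolding \<gamma>_def .
qed



definition Phi :: "('v,'e,'k,'z) network_scheme \<Rightarrow> ('e \<Rightarrow> real) \<Rightarrow> ('e \<Rightarrow> real) \<Rightarrow> real" where
  "Phi G W t = (\<Sum>k\<in>comms G. distw G t (orig G k) (dest G k)) - tdot G t W"

definition gQ :: "('v,'e,'k,'z) network_scheme \<Rightarrow> ('e \<Rightarrow> real) \<Rightarrow> ('k \<Rightarrow> 'e list) \<Rightarrow> ('e \<Rightarrow> real) \<Rightarrow> real" where
  "gQ G W Q t = (\<Sum>k\<in>comms G. wlen G t (Q k)) - tdot G t W"

abbreviation FT :: "('e \<Rightarrow> real) topology" where
  "FT \<equiv> product_topology (\<lambda>_. euclideanreal) UNIV"

lemma cont_proj: "continuous_map FT euclideanreal (\<lambda>t. t e)"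
  using continuous_map_product_projection[of e UNIV "\<lambda>_. euclideanreal"] by simp

lemma cont_tbar: "continuous_map FT euclideanreal (\<lambda>t. text_bar G t e)"
proof (cases "e \<in> tolled G")
  case True
  then have "(\<lambda>t. text_bar G t e) = (\<lambda>t. t e)" by (auto simp: text_bar_def)
  then show ?thesis using cont_proj by simp
next
  case False
  then have "(\<lambda>t. text_bar G t e) = (\<lambda>t. 0)" by (auto simp: text_bar_def)
  then show ?thesis by simp
qed

lemma cont_wlen: "continuous_map FT euclideanreal (\<lambda>t. wlen G t P)"
proof (induction P)
  case Nil
  then show ?case by simp
next
  case (Cons e P)
  have "continuous_map FT euclideanreal (\<lambda>t. wt G t e)"
    unfolding wt_def by (intro continuous_map_add continuous_map_const[THEN iffD2] cont_tbar) auto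
  then show ?case using Cons by (simp add: continuous_map_add)
qed

lemma cont_tdot: "finite (tolled G) \<Longrightarrow> continuous_map FT euclideanreal (\<lambda>t. tdot G t W)"
  unfolding tdot_def by (intro continuous_map_sum continuous_map_real_mult_right cont_proj)

lemma cont_gQ: "finite (comms G) \<Longrightarrow> finite (tolled G) \<Longrightarrow> continuous_map FT euclideanreal (gQ G W Q)"
  unfolding gQ_def by (intro continuous_map_diff continuous_map_sum cont_wlen cont_tdot)

lemma topspace_FT[simp]: "topspace FT = UNIV"
  by simp

lemma closed_gQ:
  assumes "finite (comms G)" "finite (tolled G)"
  shows "closedin FT {t \<in> topspace FT. gQ G W Q t \<in> {\<alpha>..}}"
  by (rule closedin_continuous_map_preimage[OF cont_gQ[OF assms]]) simp


lemma attain: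
  assumes v: "valid_network G" and W: "\<forall>e\<in>tolled G. 0 \<le> W e"
  shows "\<exists>t0\<in>{t\<in>tollvecs (tolled G). nonneg G t}. \<forall>t\<in>{t\<in>tollvecs (tolled G). nonneg G t}. Phi G W t \<le> Phi G W t0"
proof -
  let ?K = "comms G" and ?A = "{t\<in>tollvecs (tolled G). nonneg G t}"
  have finK: "finite ?K" and neK: "?K \<noteq> {}" and finT: "finite (tolled G)" and TA: "tolled G \<subseteq> arcs G"
    and costnn: "\<forall>e\<in>arcs G. 0 \<le> cost G e"
    using v by (auto simp: valid_network_def intro: finite_subset)
  have "\<forall>k\<in>?K. \<exists>P. walk G (orig G k) P (dest G k) \<and> set P \<inter> tolled G = {}"
    using walk_free[OF v] by blast
  from bchoice[OF this] obtain P0 where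
    P00: "\<forall>k\<in>?K. walk G (orig G k) (P0 k) (dest G k) \<and> set (P0 k) \<inter> tolled G = {}" by blast
  have P0: "\<And>k. k \<in> ?K \<Longrightarrow> walk G (orig G k) (P0 k) (dest G k)"
      "\<And>k. k \<in> ?K \<Longrightarrow> set (P0 k) \<inter> tolled G = {}"
    using P00 by blast+
  define C where "C k = wlen G (\<lambda>_. 0) (P0 k)" for k
  define M where "M = (\<Sum>k\<in>?K. C k)"
  have C0: "0 \<le> C k" if "k \<in> ?K" for k
    unfolding C_def using wlen_nonneg[OF P0(1)[OF that] v] by simp
  have CM: "C k \<le> M" if "k \<in> ?K" for k
    unfolding M_def using C0 that finK by (intro member_le_sum) auto
  have M0: "0 \<le> M" unfolding M_def using C0 by (intro sum_nonneg) auto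
  have distC: "distw G t (orig G k) (dest G k) \<le> C k" if "t \<in> ?A" "k \<in> ?K" for t k
  proof -
    have "distw G t (orig G k) (dest G k) \<le> wlen G t (P0 k)"
      using dist_le[OF v _ P0(1)[OF that(2)]] that(1) by blast
    also have "\<dots> = C k" unfolding C_def by (rule wlen_free[OF P0(2)[OF that(2)]])
    finally show ?thesis .
  qed
  define clamp where "clamp t = (\<lambda>e. min (t e) M)" for t :: "'b \<Rightarrow> real"
  have clampA: "clamp t \<in> ?A" if "t \<in> ?A" for t
    using that M0 by (auto simp: clamp_def tollvecs_def)
  have dist_clamp: "distw G t (orig G k) (dest G k) \<le> distw G (clamp t) (orig G k) (dest G k)"
    if t: "t \<in> ?A" and k: "k \<in> ?K" for t k
    unfolding distw_def[of G "clamp t"]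
  proof (rule cInf_greatest)
    show "wlen G (clamp t) ` {es. walk G (orig G k) es (dest G k)} \<noteq> {}" using P0(1)[OF k] by blast
    fix x assume "x \<in> wlen G (clamp t) ` {es. walk G (orig G k) es (dest G k)}"
    then obtain P where P: "walk G (orig G k) P (dest G k)" and x: "x = wlen G (clamp t) P" by blast
    have ct: "nonneg G (clamp t)" using clampA[OF t] by blast
    show "distw G t (orig G k) (dest G k) \<le> x"
    proof (cases "\<exists>e\<in>set P. e \<in> tolled G \<and> M < t e")
      case True
      then obtain e where e: "e \<in> set P" "e \<in> tolled G" "M < t e" by blast
      have "e \<in> arcs G" using walk_arcs[OF P] e(1) by blast
      then have "M \<le> wt G (clamp t) e"
        using e costnn by (auto simp: wt_def text_bar_def clamp_def)
      also have "\<dots> \<le> wlen G (clamp t) P" using wlen_ge_elem[OF P v ct e(1)] .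
      finally have "M \<le> x" using x by simp
      then show ?thesis using distC[OF t k] CM[OF k] by linarith
    next
      case False
      have "wlen G (clamp t) P = wlen G t P"
        unfolding wlen_def
        by (rule arg_cong[where f=sum_list], rule map_cong)
           (use False in \<open>auto simp: wt_def text_bar_def clamp_def\<close>)
      then show ?thesis using dist_le[OF v _ P, of t] t x by simp
    qed
  qed
  have tdot_clamp: "tdot G (clamp t) W \<le> tdot G t W" for t
    unfolding tdot_def clamp_def using W by (intro sum_mono mult_right_mono) auto
  have Phi_clamp: "Phi G W t \<le> Phi G W (clamp t)" if "t \<in> ?A" for t
  proof -
    have "(\<Sum>k\<in>?K. distw G t (orig G k) (dest G k)) \<le> (\<Sum>k\<in>?K. distw G (clamp t) (orig G k) (dest G k))"
      using dist_clamp[OF that] by (intro sum_mono) auto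
    then show ?thesis unfolding Phi_def using tdot_clamp[of t] by linarith
  qed
  have tdot_nn: "0 \<le> tdot G t W" if "t \<in> ?A" for t
    unfolding tdot_def using that W by (intro sum_nonneg) auto
  have Phi_le: "Phi G W t \<le> M" if "t \<in> ?A" for t
  proof -
    have "(\<Sum>k\<in>?K. distw G t (orig G k) (dest G k)) \<le> M"
      unfolding M_def using distC[OF that] by (intro sum_mono) auto
    then show ?thesis unfolding Phi_def using tdot_nn[OF that] by linarith
  qed
  have zeroA: "(\<lambda>_. 0) \<in> ?A" by (auto simp: tollvecs_def)
  have neA: "?A \<noteq> {}" using zeroA by blast
  have bddA: "bdd_above (Phi G W ` ?A)" using Phi_le by (intro bdd_aboveI[of _ M]) auto
  define \<sigma> where "\<sigma> = (SUP t\<in>?A. Phi G W t)"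
  define B where "B = {t. \<forall>e. t e \<in> (if e \<in> tolled G then {0..M} else {0})}"
  have BA: "B \<subseteq> ?A" unfolding B_def tollvecs_def by (auto split: if_splits)
  have clampB: "clamp t \<in> B" if "t \<in> ?A" for t
    using that M0 unfolding B_def clamp_def tollvecs_def by auto
  have compB: "compactin FT B"
  proof -
    have "B = PiE UNIV (\<lambda>e. if e \<in> tolled G then {0..M} else {0})"
      unfolding B_def PiE_UNIV_domain Pi_def by auto
    moreover have "compactin FT (PiE UNIV (\<lambda>e. if e \<in> tolled G then {0..M} else {0::real}))"
      by (subst compactin_PiE) auto
    ultimately show ?thesis by simp
  qed
  define U where "U = {{t \<in> topspace FT. gQ G W Q t \<in> {\<alpha>..}} | \<alpha> Q. \<alpha> < \<sigma> \<and> (\<forall>k\<in>?K. walk G (orig G k) (Q k) (dest G k))}"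
  have gQ_ge: "Phi G W t \<le> gQ G W Q t" if "t \<in> ?A" "\<forall>k\<in>?K. walk G (orig G k) (Q k) (dest G k)" for t Q
  proof -
    have "(\<Sum>k\<in>?K. distw G t (orig G k) (dest G k)) \<le> (\<Sum>k\<in>?K. wlen G t (Q k))"
      using that dist_le[OF v] by (intro sum_mono) auto
    then show ?thesis unfolding Phi_def gQ_def by linarith
  qed
  have closedU: "\<forall>C\<in>U. closedin FT C"
    unfolding U_def using closed_gQ[OF finK finT] by blast
  have fip: "\<forall>F. finite F \<and> F \<subseteq> U \<longrightarrow> B \<inter> \<Inter>F \<noteq> {}"
  proof (intro allI impI)
    fix F assume F: "finite F \<and> F \<subseteq> U"
    show "B \<inter> \<Inter>F \<noteq> {}"
    proof (cases "F = {}")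
      case True
      then show ?thesis using clampB[OF zeroA] by auto
    next
      case False
      have "\<forall>C\<in>F. \<exists>\<alpha>. \<alpha> < \<sigma> \<and> (\<forall>t\<in>?A. \<alpha> \<le> Phi G W t \<longrightarrow> t \<in> C)"
      proof
        fix C assume "C \<in> F"
        then have "C \<in> U" using F by blast
        then obtain \<alpha> Q where CQ: "C = {t \<in> topspace FT. gQ G W Q t \<in> {\<alpha>..}}" "\<alpha> < \<sigma>"
          "\<forall>k\<in>?K. walk G (orig G k) (Q k) (dest G k)"
          unfolding U_def by blast
        have "\<forall>t\<in>?A. \<alpha> \<le> Phi G W t \<longrightarrow> t \<in> C"
        proof (intro ballI impI)
          fix t assume "t \<in> ?A" "\<alpha> \<le> Phi G W t"
          then have "\<alpha> \<le> gQ G W Q t" using gQ_ge[OF _ CQ(3)] by (meson order_trans)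
          then show "t \<in> C" using CQ(1) by simp
        qed
        then show "\<exists>\<alpha>. \<alpha> < \<sigma> \<and> (\<forall>t\<in>?A. \<alpha> \<le> Phi G W t \<longrightarrow> t \<in> C)" using CQ(2) by blast
      qed
      from bchoice[OF this] obtain af where
        af0: "\<forall>C\<in>F. af C < \<sigma> \<and> (\<forall>t\<in>?A. af C \<le> Phi G W t \<longrightarrow> t \<in> C)" by blast
      have af: "\<And>C. C \<in> F \<Longrightarrow> af C < \<sigma>"
        "\<And>C t. C \<in> F \<Longrightarrow> t \<in> ?A \<Longrightarrow> af C \<le> Phi G W t \<Longrightarrow> t \<in> C"
        using af0 by blast+
      define am where "am = Max (af ` F)"
      have finF: "finite F" using F by blast
      have am_in: "am \<in> af ` F" unfolding am_def using finF False by (intro Max_in) auto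
      then have amlt: "am < \<sigma>" using af(1) by blast
      have amge: "af C \<le> am" if "C \<in> F" for C
        unfolding am_def using finF that by (intro Max_ge) auto
      obtain t where t: "t \<in> ?A" "am < Phi G W t"
        using amlt less_cSUP_iff[OF neA bddA] unfolding \<sigma>_def by blast
      have ct: "clamp t \<in> ?A" "am < Phi G W (clamp t)" using clampA[OF t(1)] Phi_clamp[OF t(1)] t(2) by auto
      have "clamp t \<in> \<Inter>F"
      proof
        fix C assume C: "C \<in> F"
        show "clamp t \<in> C" using af(2)[OF C ct(1)] amge[OF C] ct(2) by linarith
      qed
      then show ?thesis using clampB[OF t(1)] by blast
    qed
  qed
  have "B \<inter> \<Inter>U \<noteq> {}"
    using compB closedU fip unfolding compactin_fip by blast
  then obtain ts where ts: "ts \<in> B" "\<forall>C\<in>U. ts \<in> C" by blast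
  have tsA: "ts \<in> ?A" using ts(1) BA by blast
  have "\<sigma> \<le> Phi G W ts"
  proof (rule ccontr)
    assume "\<not> \<sigma> \<le> Phi G W ts"
    then have lt: "Phi G W ts < \<sigma>" by simp
    define \<delta> where "\<delta> = \<sigma> - Phi G W ts"
    have d0: "0 < \<delta>" using lt unfolding \<delta>_def by simp
    define \<epsilon> where "\<epsilon> = \<delta> / (2 * real (card ?K))"
    have cK: "0 < real (card ?K)" using finK neK by (simp add: card_gt_0_iff)
    have e0: "0 < \<epsilon>" unfolding \<epsilon>_def using d0 cK by simp
    have "\<forall>k\<in>?K. \<exists>Q. walk G (orig G k) Q (dest G k) \<and> wlen G ts Q < distw G ts (orig G k) (dest G k) + \<epsilon>"
      using dist_approx[OF v P0(1) e0] by blast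
    from bchoice[OF this] obtain Q where
      Q0: "\<forall>k\<in>?K. walk G (orig G k) (Q k) (dest G k) \<and> wlen G ts (Q k) < distw G ts (orig G k) (dest G k) + \<epsilon>"
      by blast
    have Q: "\<And>k. k \<in> ?K \<Longrightarrow> walk G (orig G k) (Q k) (dest G k)"
      "\<And>k. k \<in> ?K \<Longrightarrow> wlen G ts (Q k) < distw G ts (orig G k) (dest G k) + \<epsilon>"
      using Q0 by blast+
    define \<alpha> where "\<alpha> = \<sigma> - \<delta> / 2"
    have "\<alpha> < \<sigma>" unfolding \<alpha>_def using d0 by simp
    then have CU: "{t \<in> topspace FT. gQ G W Q t \<in> {\<alpha>..}} \<in> U"
      unfolding U_def using Q(1) by blast
    have "ts \<in> {t \<in> topspace FT. gQ G W Q t \<in> {\<alpha>..}}" using ts(2) CU by (rule bspec)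
    then have "\<alpha> \<le> gQ G W Q ts" by simp
    moreover have "(\<Sum>k\<in>?K. wlen G ts (Q k)) < (\<Sum>k\<in>?K. distw G ts (orig G k) (dest G k) + \<epsilon>)"
      using Q(2) finK neK by (intro sum_strict_mono) auto
    moreover have "(\<Sum>k\<in>?K. distw G ts (orig G k) (dest G k) + \<epsilon>) = (\<Sum>k\<in>?K. distw G ts (orig G k) (dest G k)) + \<delta> / 2"
      unfolding \<epsilon>_def using cK by (simp add: sum.distrib)
    ultimately have "\<alpha> < Phi G W ts + \<delta> / 2" unfolding gQ_def Phi_def by linarith
    then show False unfolding \<alpha>_def \<delta>_def by (simp add: field_simps)
  qed
  moreover have "\<forall>t\<in>?A. Phi G W t \<le> \<sigma>"
    unfolding \<sigma>_def using bddA by (auto intro: cSUP_upper)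
  ultimately show ?thesis using tsA by force
qed


lemma sum_minf: "finite K \<Longrightarrow> K \<noteq> {} \<Longrightarrow> (\<Sum>k\<in>K. (-\<infinity>::ereal)) = -\<infinity>"
  by (induction K rule: finite_ne_induct) auto

lemma tdot_sum: "finite K \<Longrightarrow> tdot G t (\<lambda>e. \<Sum>k\<in>K. w k e) = (\<Sum>k\<in>K. tdot G t (w k))"
  unfolding tdot_def by (simp add: sum_distrib_left sum.swap[of _ "tolled G"])

lemma phi_bound:
  assumes v: "valid_network G" and k: "k \<in> comms G" and wk: "\<forall>e\<in>tolled G. 0 \<le> wk e"
  shows "\<exists>B. \<forall>t\<in>{t\<in>tollvecs (tolled G). nonneg G t}. distw G t (orig G k) (dest G k) - tdot G t wk \<le> B"
proof -
  obtain P0 where P0: "walk G (orig G k) P0 (dest G k)" "set P0 \<inter> tolled G = {}"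
    using walk_free[OF v k] by blast
  have "distw G t (orig G k) (dest G k) - tdot G t wk \<le> wlen G (\<lambda>_. 0) P0"
    if t: "t \<in> {t\<in>tollvecs (tolled G). nonneg G t}" for t
  proof -
    have "distw G t (orig G k) (dest G k) \<le> wlen G t P0" using dist_le[OF v _ P0(1)] t by blast
    also have "\<dots> = wlen G (\<lambda>_. 0) P0" by (rule wlen_free[OF P0(2)])
    finally have a: "distw G t (orig G k) (dest G k) \<le> wlen G (\<lambda>_. 0) P0" .
    have "0 \<le> tdot G t wk" unfolding tdot_def using t wk by (intro sum_nonneg) auto
    then show ?thesis using a by linarith
  qed
  then show ?thesis by blast
qed

theorem lemma5:
  fixes G :: "('v, 'e, 'k) network" and w :: "'k \<Rightarrow> 'e \<Rightarrow> real"
  assumes "valid_network G"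
    and "\<forall>k\<in>comms G. w k \<in> tollvecs (tolled G) \<and> (\<forall>e\<in>tolled G. 0 \<le> w k e)"
  shows "gtot G (\<lambda>e. \<Sum>k\<in>comms G. w k e) = (\<Sum>k\<in>comms G. gk G k (w k))
     \<longleftrightarrow> Ttot G (\<lambda>e. \<Sum>k\<in>comms G. w k e) = (\<Inter>k\<in>comms G. Tk G k (w k))"
proof -
  note v = assms(1)
  define K where "K = comms G"
  define S where "S = tollvecs (tolled G)"
  define A where "A = {t\<in>S. nonneg G t}"
  define W where "W = (\<lambda>e. \<Sum>k\<in>K. w k e)"
  define dk where "dk k t = distw G t (orig G k) (dest G k)" for k t
  define \<phi> where "\<phi> k t = dk k t - tdot G t (w k)" for k t
  have finK: "finite K" and neK: "K \<noteq> {}" using v unfolding K_def valid_network_def by auto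
  have wnn: "\<And>k. k \<in> K \<Longrightarrow> \<forall>e\<in>tolled G. 0 \<le> w k e" using assms(2) unfolding K_def by blast
  have Wnn: "\<forall>e\<in>tolled G. 0 \<le> W e" unfolding W_def using wnn by (auto intro: sum_nonneg)
  have PhiEq: "Phi G W t = (\<Sum>k\<in>K. \<phi> k t)" for t
    unfolding Phi_def \<phi>_def dk_def W_def K_def[symmetric]
    by (simp add: tdot_sum[OF finK] sum_subtractf)
  have zeroA: "(\<lambda>_. 0) \<in> A" by (auto simp: A_def S_def tollvecs_def)
  have TkEq: "Tk G k (w k) = {t\<in>A. \<forall>t'\<in>A. \<phi> k t' \<le> \<phi> k t}" if k: "k \<in> K" for k
  proof -
    have "Tk G k (w k) = {t\<in>S. nonneg G t \<and> (\<forall>t'\<in>S. nonneg G t' \<longrightarrow> dk k t' - tdot G t' (w k) \<le> dk k t - tdot G t (w k))}"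
      unfolding Tk_def S_def[symmetric]
    proof (rule argmax_char[where F="dual_feas G" and P="nonneg G" and obj="bdot G k" and r="dk k"
          and d="\<lambda>t. tdot G t (w k)"])
      show "\<And>t y. dual_feas G t y \<Longrightarrow> nonneg G t" by (simp add: dual_feas_def)
      show "\<And>t. t \<in> S \<Longrightarrow> nonneg G t \<Longrightarrow> \<exists>y. dual_feas G t y \<and> bdot G k y = dk k t"
        unfolding dk_def using strong_duality[OF v k[unfolded K_def]] by blast
      show "\<And>t y. t \<in> S \<Longrightarrow> dual_feas G t y \<Longrightarrow> bdot G k y \<le> dk k t"
        unfolding dk_def using dist_weak[OF v k[unfolded K_def]] by blast
    qed
    then show ?thesis unfolding A_def \<phi>_def by auto
  qed
  have TtotEq: "Ttot G W = {t\<in>A. \<forall>t'\<in>A. Phi G W t' \<le> Phi G W t}"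
  proof -
    have "Ttot G W = {t\<in>S. nonneg G t \<and> (\<forall>t'\<in>S. nonneg G t' \<longrightarrow> (\<Sum>k\<in>K. dk k t') - tdot G t' W \<le> (\<Sum>k\<in>K. dk k t) - tdot G t W)}"
      unfolding Ttot_def S_def[symmetric] K_def[symmetric]
    proof (rule argmax_char[where F="\<lambda>t Y. \<forall>k\<in>K. dual_feas G t (Y k)" and P="nonneg G"
          and obj="\<lambda>Y. \<Sum>k\<in>K. bdot G k (Y k)" and r="\<lambda>t. \<Sum>k\<in>K. dk k t" and d="\<lambda>t. tdot G t W"])
      show "\<And>t Y. \<forall>k\<in>K. dual_feas G t (Y k) \<Longrightarrow> nonneg G t"
        using neK by (auto simp: dual_feas_def)
      show "\<exists>Y. (\<forall>k\<in>K. dual_feas G t (Y k)) \<and> (\<Sum>k\<in>K. bdot G k (Y k)) = (\<Sum>k\<in>K. dk k t)"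
        if "t \<in> S" "nonneg G t" for t
      proof -
        have "\<forall>k\<in>K. \<exists>y. dual_feas G t y \<and> bdot G k y = dk k t"
          unfolding dk_def K_def using strong_duality[OF v _ that(2)] by blast
        from bchoice[OF this] obtain Y where Y: "\<forall>k\<in>K. dual_feas G t (Y k) \<and> bdot G k (Y k) = dk k t" by blast
        then have "(\<Sum>k\<in>K. bdot G k (Y k)) = (\<Sum>k\<in>K. dk k t)" by (intro sum.cong) auto
        then show ?thesis using Y by blast
      qed
      show "(\<Sum>k\<in>K. bdot G k (Y k)) \<le> (\<Sum>k\<in>K. dk k t)"
        if "t \<in> S" "\<forall>k\<in>K. dual_feas G t (Y k)" for t Y
        using that dist_weak[OF v] unfolding dk_def K_def by (intro sum_mono) blast
    qed
    then show ?thesis unfolding A_def Phi_def dk_def K_def by auto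
  qed
  have bddk: "bdd_above (\<phi> k ` A)" if k: "k \<in> K" for k
  proof -
    obtain B where "\<forall>t\<in>A. \<phi> k t \<le> B"
      using phi_bound[OF v k[unfolded K_def] wnn[OF k]] unfolding A_def S_def \<phi>_def dk_def by blast
    then show ?thesis by (intro bdd_aboveI[of _ B]) auto
  qed
  have "\<forall>k\<in>K. \<exists>B. \<forall>t\<in>A. \<phi> k t \<le> B"
    using phi_bound[OF v _ wnn] unfolding A_def S_def \<phi>_def dk_def K_def by blast
  from bchoice[OF this] obtain Bk where Bk: "\<forall>k\<in>K. \<forall>t\<in>A. \<phi> k t \<le> Bk k" by blast
  have bddPhi: "bdd_above ((\<lambda>t. Phi G W t) ` A)"
  proof (intro bdd_aboveI[of _ "\<Sum>k\<in>K. Bk k"])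
    fix x assume "x \<in> (\<lambda>t. Phi G W t) ` A"
    then obtain t where t: "t \<in> A" "x = Phi G W t" by blast
    have "(\<Sum>k\<in>K. \<phi> k t) \<le> (\<Sum>k\<in>K. Bk k)" using Bk t(1) by (intro sum_mono) auto
    then show "x \<le> (\<Sum>k\<in>K. Bk k)" using t(2) PhiEq by simp
  qed
  have gkEq: "gk G k (w k) = ereal (SUP t\<in>A. \<phi> k t)" if k: "k \<in> K" for k
    unfolding gk_def S_def[symmetric] A_def
  proof (rule sup_conv)
    show "\<And>t. t \<in> S \<Longrightarrow> \<not> nonneg G t \<Longrightarrow> fk G k t - ereal (tdot G t (w k)) = -\<infinity>"
      by (auto simp: fk_def)
    show "\<And>t. t \<in> S \<Longrightarrow> nonneg G t \<Longrightarrow> fk G k t - ereal (tdot G t (w k)) = ereal (\<phi> k t)"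
      using fk_eq[OF v k[unfolded K_def]] by (simp add: \<phi>_def dk_def)
    show "{t \<in> S. nonneg G t} \<noteq> {}" using zeroA unfolding A_def by blast
    show "bdd_above (\<phi> k ` {t \<in> S. nonneg G t})" using bddk[OF k] unfolding A_def .
  qed
  have gtotEq: "gtot G W = ereal (SUP t\<in>A. Phi G W t)"
    unfolding gtot_def S_def[symmetric] A_def
  proof (rule sup_conv)
    show "ftot G t - ereal (tdot G t W) = -\<infinity>" if "t \<in> S" "\<not> nonneg G t" for t
    proof -
      have "ftot G t = (\<Sum>k\<in>K. (-\<infinity>::ereal))"
        unfolding ftot_def K_def[symmetric] using that(2) by (intro sum.cong) (auto simp: fk_def)
      then show ?thesis using sum_minf[OF finK neK] by simp
    qed
    show "ftot G t - ereal (tdot G t W) = ereal (Phi G W t)" if "t \<in> S" "nonneg G t" for t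
    proof -
      have "ftot G t = (\<Sum>k\<in>K. ereal (dk k t))"
        unfolding ftot_def K_def[symmetric] using that(2) fk_eq[OF v] unfolding dk_def K_def
        by (intro sum.cong) auto
      then show ?thesis by (simp add: Phi_def dk_def K_def)
    qed
    show "{t \<in> S. nonneg G t} \<noteq> {}" using zeroA unfolding A_def by blast
    show "bdd_above (Phi G W ` {t \<in> S. nonneg G t})" using bddPhi unfolding A_def .
  qed
  obtain t0 where t0: "t0 \<in> A" "\<forall>t\<in>A. Phi G W t \<le> Phi G W t0"
    using attain[OF v Wnn] unfolding A_def S_def by blast
  have main: "(SUP t\<in>A. \<Sum>k\<in>K. \<phi> k t) = (\<Sum>k\<in>K. SUP t\<in>A. \<phi> k t) \<longleftrightarrow>
         {t\<in>A. \<forall>t'\<in>A. (\<Sum>k\<in>K. \<phi> k t') \<le> (\<Sum>k\<in>K. \<phi> k t)} = (\<Inter>k\<in>K. {t\<in>A. \<forall>t'\<in>A. \<phi> k t' \<le> \<phi> k t})"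
    by (rule main_abstract[OF finK neK bddk t0(1)]) (use t0(2) PhiEq in auto)
  have L: "gtot G W = (\<Sum>k\<in>K. gk G k (w k)) \<longleftrightarrow> (SUP t\<in>A. \<Sum>k\<in>K. \<phi> k t) = (\<Sum>k\<in>K. SUP t\<in>A. \<phi> k t)"
  proof -
    have "(\<Sum>k\<in>K. gk G k (w k)) = (\<Sum>k\<in>K. ereal (SUP t\<in>A. \<phi> k t))" using gkEq by (intro sum.cong) auto
    also have "\<dots> = ereal (\<Sum>k\<in>K. SUP t\<in>A. \<phi> k t)" by simp
    finally have "(\<Sum>k\<in>K. gk G k (w k)) = ereal (\<Sum>k\<in>K. SUP t\<in>A. \<phi> k t)" .
    moreover have "gtot G W = ereal (SUP t\<in>A. \<Sum>k\<in>K. \<phi> k t)" using gtotEq PhiEq by simp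
    ultimately show ?thesis by simp
  qed
  have R: "Ttot G W = (\<Inter>k\<in>K. Tk G k (w k)) \<longleftrightarrow>
      {t\<in>A. \<forall>t'\<in>A. (\<Sum>k\<in>K. \<phi> k t') \<le> (\<Sum>k\<in>K. \<phi> k t)} = (\<Inter>k\<in>K. {t\<in>A. \<forall>t'\<in>A. \<phi> k t' \<le> \<phi> k t})"
  proof -
    have "(\<Inter>k\<in>K. Tk G k (w k)) = (\<Inter>k\<in>K. {t\<in>A. \<forall>t'\<in>A. \<phi> k t' \<le> \<phi> k t})"
      using TkEq by (intro INF_cong) auto
    moreover have "Ttot G W = {t\<in>A. \<forall>t'\<in>A. (\<Sum>k\<in>K. \<phi> k t') \<le> (\<Sum>k\<in>K. \<phi> k t)}"
      using TtotEq PhiEq by simp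
    ultimately show ?thesis by simp
  qed
  show ?thesis using L R main unfolding W_def K_def by simp
qed


end
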